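(* If a history-deterministic one-counter net $\mathcal{N}=(Q,\Sigma,\Delta,q_0,F)$ satisfies the semilinear-strategy property, then there is a deterministic one-counter automaton $\mathcal{D}$ with $\mathcal{L}(\mathcal{D})=\mathcal{L}(\mathcal{N})$.
   Context: A one-counter net (OCN) is $\mathcal{N}=(Q,\Sigma,\Delta,q_0,F)$ with $Q$ finite, $\Sigma$ finite, $q_0\in Q$, $F\subseteq Q$, $\Delta\subseteq Q\times\Sigma\times\{-1,0,1\}\times Q$; configurations $(q,n)\in Q\times\mathbb{N}$, step $(q,n)\xrightarrow{a,d}(p,n+d)$ if $(q,a,d,p)\in\Delta$ and $n+d\ge0$; runs start at $(q_0,0)$ and are accepting if the last state is in $F$; $\mathcal{L}(\mathcal{N})$ is the set of words with an accepting run. Letter game: positions $(c,w)$, start $((q_0,0),\varepsilon)$; each round Adam picks $a\in\Sigma$, Eve picks a step $c\xrightarrow{a,d}c'$; if Eve has none and $wa$ is a prefix of a word of $\mathcal{L}(\mathcal{N})$ she loses; if $wa\in\mathcal{L}(\mathcal{N})$ but the state of $c'$ is not in $F$, Adam wins; otherwise continue; Eve wins infinite plays. $\mathcal{N}$ is history-deterministic if Eve wins the letter game. The game $G_1$ from $(c^E,c^A)$: each round Adam picks $a$; Eve moves her token $c^E\xrightarrow{a,d}c^E_+$; Adam moves his $c^A\xrightarrow{a,d'}c^A_+$; Adam loses if he cannot move; Eve loses if she cannot move while Adam can move and extend to an accepting run, or if $c^A_+$ has an accepting state and $c^E_+$ does not; Eve wins infinite plays. A transition $\delta=(p,a,d,p')$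 is good at $(p,k)$ if Eve wins $G_1$ from $((p,k),(p,k))$ and the step $(p,k)\xrightarrow{a,d}(p',k+d)$ is a winning move for Eve when Adam picks $a$. $\mathcal{N}$ satisfies the semilinear-strategy property if for every $\delta\in\Delta$ the set $\mathcal{S}_\delta=\{k\in\mathbb{N}:\delta\text{ is good at }(p,k)\}$ is semilinear (a finite union of arithmetic progressions, i.e. eventually periodic). A one-counter automaton is $(Q,\Sigma,\Delta,q_0,F)$ with $\Delta\subseteq Q\times\{\mathrm{zero},\neg\mathrm{zero}\}\times\Sigma\times\{-1,0,1\}\times Q$, $\mathrm{zero}$-transitions usable only at counter $0$ (update in $\{0,1\}$), $\neg\mathrm{zero}$-transitions only at positive counter; it is deterministic if $\Delta$ is a partial function from $Q\times\{\mathrm{zero},\neg\mathrm{zero}\}\times\Sigma$ to $\{-1,0,1\}\times Q$. *)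

theory Defs
  imports Main
begin

record ('q, 'a) ocn =
  ocn_states :: "'q set"
  ocn_alph   :: "'a set"
  ocn_trans  :: "('q \<times> 'a \<times> int \<times> 'q) set"
  ocn_init   :: 'q
  ocn_final  :: "'q set"

definition ocn_wf :: "('q, 'a) ocn \<Rightarrow> bool" where
  "ocn_wf N \<longleftrightarrow> finite (ocn_states N) \<and> finite (ocn_alph N) \<and>
     ocn_init N \<in> ocn_states N \<and> ocn_final N \<subseteq> ocn_states N \<and>
     ocn_trans N \<subseteq> ocn_states N \<times> ocn_alph N \<times> {-1, 0, 1} \<times> ocn_states N"

definition ocn_step_d :: "('q, 'a) ocn \<Rightarrow> 'q \<times> nat \<Rightarrow> 'a \<Rightarrow> int \<Rightarrow> 'q \<times> nat \<Rightarrow> bool" where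
  "ocn_step_d N c a d c' \<longleftrightarrow> (fst c, a, d, fst c') \<in> ocn_trans N \<and>
      int (snd c) + d \<ge> 0 \<and> int (snd c') = int (snd c) + d"

definition ocn_step :: "('q, 'a) ocn \<Rightarrow> 'q \<times> nat \<Rightarrow> 'a \<Rightarrow> 'q \<times> nat \<Rightarrow> bool" where
  "ocn_step N c a c' \<longleftrightarrow> (\<exists>d. ocn_step_d N c a d c')"

inductive ocn_run :: "('q, 'a) ocn \<Rightarrow> 'q \<times> nat \<Rightarrow> 'a list \<Rightarrow> 'q \<times> nat \<Rightarrow> bool"
  for N where
  run_nil:  "ocn_run N c [] c"
| run_cons: "ocn_step N c a c' \<Longrightarrow> ocn_run N c' w c'' \<Longrightarrow> ocn_run N c (a # w) c''"

definition ocn_lang :: "('q, 'a) ocn \<Rightarrow> 'a list set" where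
  "ocn_lang N = {w. \<exists>c. ocn_run N (ocn_init N, 0) w c \<and> fst c \<in> ocn_final N}"

text \<open>A strategy of Eve in the letter game is given by the configuration
  f w she has reached after Adam played the word w (her moves are determined
  by the history, which is the word played so far).\<close>
definition letter_reached :: "('q, 'a) ocn \<Rightarrow> ('a list \<Rightarrow> 'q \<times> nat) \<Rightarrow> 'a list \<Rightarrow> bool" where
  "letter_reached N f w \<longleftrightarrow> set w \<subseteq> ocn_alph N \<and>
     (\<forall>i < length w. ocn_step N (f (take i w)) (w ! i) (f (take (Suc i) w)))"

definition letter_game_winning :: "('q, 'a) ocn \<Rightarrow> ('a list \<Rightarrow> 'q \<times> nat) \<Rightarrow> bool" where
  "letter_game_winning N f \<longleftrightarrow> f [] = (ocn_init N, 0) \<and>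
     (\<forall>w a. letter_reached N f w \<and> a \<in> ocn_alph N \<longrightarrow>
        ((\<exists>c'. ocn_step N (f w) a c') \<longrightarrow>
            ocn_step N (f w) a (f (w @ [a])) \<and>
            (w @ [a] \<in> ocn_lang N \<longrightarrow> fst (f (w @ [a])) \<in> ocn_final N)) \<and>
        (\<not> (\<exists>c'. ocn_step N (f w) a c') \<longrightarrow>
            \<not> (\<exists>v. (w @ [a]) @ v \<in> ocn_lang N)))"

definition history_deterministic :: "('q, 'a) ocn \<Rightarrow> bool" where
  "history_deterministic N \<longleftrightarrow> (\<exists>f. letter_game_winning N f)"

text \<open>A history of G_1 is the list of completed rounds (letter of Adam,
  configuration Adam moved his token to).\<close>
type_synonym ('q, 'a) g1_strategy = "('a \<times> ('q \<times> nat)) list \<Rightarrow> 'a \<Rightarrow> 'q \<times> nat"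

definition g1_posE :: "('q, 'a) g1_strategy \<Rightarrow> 'q \<times> nat \<Rightarrow> ('a \<times> ('q \<times> nat)) list \<Rightarrow> 'q \<times> nat" where
  "g1_posE \<sigma> cE h = (if h = [] then cE else \<sigma> (butlast h) (fst (last h)))"

definition g1_posA :: "'q \<times> nat \<Rightarrow> ('a \<times> ('q \<times> nat)) list \<Rightarrow> 'q \<times> nat" where
  "g1_posA cA h = (if h = [] then cA else snd (last h))"

definition g1_consistent :: "('q, 'a) ocn \<Rightarrow> ('q, 'a) g1_strategy \<Rightarrow> 'q \<times> nat \<Rightarrow> 'q \<times> nat
    \<Rightarrow> ('a \<times> ('q \<times> nat)) list \<Rightarrow> bool" where
  "g1_consistent N \<sigma> cE cA h \<longleftrightarrow> (\<forall>i < length h.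
      fst (h ! i) \<in> ocn_alph N \<and>
      ocn_step N (g1_posE \<sigma> cE (take i h)) (fst (h ! i)) (g1_posE \<sigma> cE (take (Suc i) h)) \<and>
      ocn_step N (g1_posA cA (take i h)) (fst (h ! i)) (g1_posA cA (take (Suc i) h)))"

definition g1_winning :: "('q, 'a) ocn \<Rightarrow> ('q, 'a) g1_strategy \<Rightarrow> 'q \<times> nat \<Rightarrow> 'q \<times> nat \<Rightarrow> bool" where
  "g1_winning N \<sigma> cE cA \<longleftrightarrow> (\<forall>h a. g1_consistent N \<sigma> cE cA h \<and> a \<in> ocn_alph N \<longrightarrow>
     ((\<exists>e'. ocn_step N (g1_posE \<sigma> cE h) a e') \<longrightarrow>
        ocn_step N (g1_posE \<sigma> cE h) a (\<sigma> h a) \<and>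
        (\<forall>c'. ocn_step N (g1_posA cA h) a c' \<longrightarrow>
            fst c' \<in> ocn_final N \<longrightarrow> fst (\<sigma> h a) \<in> ocn_final N)) \<and>
     (\<not> (\<exists>e'. ocn_step N (g1_posE \<sigma> cE h) a e') \<longrightarrow>
        \<not> (\<exists>c'. ocn_step N (g1_posA cA h) a c' \<and>
               (\<exists>v c''. ocn_run N c' v c'' \<and> fst c'' \<in> ocn_final N))))"

definition eve_wins_G1 :: "('q, 'a) ocn \<Rightarrow> 'q \<times> nat \<Rightarrow> 'q \<times> nat \<Rightarrow> bool" where
  "eve_wins_G1 N cE cA \<longleftrightarrow> (\<exists>\<sigma>. g1_winning N \<sigma> cE cA)"

definition good_at :: "('q, 'a) ocn \<Rightarrow> 'q \<times> 'a \<times> int \<times> 'q \<Rightarrow> nat \<Rightarrow> bool" where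
  "good_at N \<delta> k = (case \<delta> of (p, a, d, p') \<Rightarrow>
      eve_wins_G1 N (p, k) (p, k) \<and>
      ocn_step_d N (p, k) a d (p', nat (int k + d)) \<and>
      (\<exists>\<sigma>. g1_winning N \<sigma> (p, k) (p, k) \<and> \<sigma> [] a = (p', nat (int k + d))))"

definition semilinear_nat :: "nat set \<Rightarrow> bool" where
  "semilinear_nat S \<longleftrightarrow> (\<exists>P. finite P \<and> S = (\<Union>(b, p)\<in>P. {b + p * i | i. True}))"

definition semilinear_strategy_property :: "('q, 'a) ocn \<Rightarrow> bool" where
  "semilinear_strategy_property N \<longleftrightarrow>
     (\<forall>\<delta> \<in> ocn_trans N. semilinear_nat {k. good_at N \<delta> k})"

datatype guard = Zero | NonZero

record ('q, 'a) oca =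
  oca_states :: "'q set"
  oca_alph   :: "'a set"
  oca_trans  :: "('q \<times> guard \<times> 'a \<times> int \<times> 'q) set"
  oca_init   :: 'q
  oca_final  :: "'q set"

definition oca_wf :: "('q, 'a) oca \<Rightarrow> bool" where
  "oca_wf D \<longleftrightarrow> finite (oca_states D) \<and> finite (oca_alph D) \<and>
     oca_init D \<in> oca_states D \<and> oca_final D \<subseteq> oca_states D \<and>
     oca_trans D \<subseteq> oca_states D \<times> UNIV \<times> oca_alph D \<times> {-1, 0, 1} \<times> oca_states D \<and>
     (\<forall>q a d p. (q, Zero, a, d, p) \<in> oca_trans D \<longrightarrow> d \<in> {0, 1})"

definition oca_deterministic :: "('q, 'a) oca \<Rightarrow> bool" where
  "oca_deterministic D \<longleftrightarrow> (\<forall>q g a d p d' p'.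
     (q, g, a, d, p) \<in> oca_trans D \<longrightarrow> (q, g, a, d', p') \<in> oca_trans D \<longrightarrow> d = d' \<and> p = p')"

definition oca_step :: "('q, 'a) oca \<Rightarrow> 'q \<times> nat \<Rightarrow> 'a \<Rightarrow> 'q \<times> nat \<Rightarrow> bool" where
  "oca_step D c a c' \<longleftrightarrow> (\<exists>g d. (fst c, g, a, d, fst c') \<in> oca_trans D \<and>
      (g = Zero \<longrightarrow> snd c = 0) \<and> (g = NonZero \<longrightarrow> snd c > 0) \<and>
      int (snd c) + d \<ge> 0 \<and> int (snd c') = int (snd c) + d)"

inductive oca_run :: "('q, 'a) oca \<Rightarrow> 'q \<times> nat \<Rightarrow> 'a list \<Rightarrow> 'q \<times> nat \<Rightarrow> bool"
  for D where
  oca_run_nil:  "oca_run D c [] c"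
| oca_run_cons: "oca_step D c a c' \<Longrightarrow> oca_run D c' w c'' \<Longrightarrow> oca_run D c (a # w) c''"

definition oca_lang :: "('q, 'a) oca \<Rightarrow> 'a list set" where
  "oca_lang D = {w. \<exists>c. oca_run D (oca_init D, 0) w c \<and> fst c \<in> oca_final D}"

end

theory Submission imports Defs "HOL-Library.Nat_Bijection" begin

lemma ocn_run_append:
  "ocn_run N c w c' \<Longrightarrow> ocn_run N c' v c'' \<Longrightarrow> ocn_run N c (w @ v) c''"
  by (induction rule: ocn_run.induct) (auto intro: ocn_run.intros)

lemma ocn_step_wf:
  assumes "ocn_wf N" "ocn_step N c a c'"
  shows "a \<in> ocn_alph N \<and> fst c \<in> ocn_states N \<and> fst c' \<in> ocn_states N"
  using assms unfolding ocn_wf_def ocn_step_def ocn_step_d_def by auto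

lemma consistent_prefix:
  assumes "g1_consistent N \<sigma> cE cA (h @ [y])"
  shows "g1_consistent N \<sigma> cE cA h"
  unfolding g1_consistent_def
proof (intro allI impI)
  fix i assume i: "i < length h"
  have "i < length (h @ [y])" using i by simp
  then have "fst ((h@[y]) ! i) \<in> ocn_alph N \<and>
      ocn_step N (g1_posE \<sigma> cE (take i (h@[y]))) (fst ((h@[y]) ! i)) (g1_posE \<sigma> cE (take (Suc i) (h@[y]))) \<and>
      ocn_step N (g1_posA cA (take i (h@[y]))) (fst ((h@[y]) ! i)) (g1_posA cA (take (Suc i) (h@[y])))"
    using assms unfolding g1_consistent_def by blast
  moreover have "take i (h@[y]) = take i h" "take (Suc i) (h@[y]) = take (Suc i) h" "(h@[y]) ! i = h ! i"
    using i by (auto simp: nth_append)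
  ultimately show "fst (h ! i) \<in> ocn_alph N \<and>
      ocn_step N (g1_posE \<sigma> cE (take i h)) (fst (h ! i)) (g1_posE \<sigma> cE (take (Suc i) h)) \<and>
      ocn_step N (g1_posA cA (take i h)) (fst (h ! i)) (g1_posA cA (take (Suc i) h))" by simp
qed

lemma consistent_snoc:
  assumes "g1_consistent N \<sigma> cE cA h" "b \<in> ocn_alph N"
    "ocn_step N (g1_posE \<sigma> cE h) b (\<sigma> h b)" "ocn_step N (g1_posA cA h) b x"
  shows "g1_consistent N \<sigma> cE cA (h @ [(b, x)])"
  unfolding g1_consistent_def
proof (intro allI impI)
  fix i assume i: "i < length (h @ [(b,x)])"
  show "fst ((h @ [(b,x)]) ! i) \<in> ocn_alph N \<and>
      ocn_step N (g1_posE \<sigma> cE (take i (h @ [(b,x)]))) (fst ((h @ [(b,x)]) ! i)) (g1_posE \<sigma> cE (take (Suc i) (h @ [(b,x)]))) \<and>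
      ocn_step N (g1_posA cA (take i (h @ [(b,x)]))) (fst ((h @ [(b,x)]) ! i)) (g1_posA cA (take (Suc i) (h @ [(b,x)])))"
  proof (cases "i < length h")
    case True
    moreover have "take i (h@[(b,x)]) = take i h" "take (Suc i) (h@[(b,x)]) = take (Suc i) h" "(h@[(b,x)]) ! i = h ! i"
      using True by (auto simp: nth_append)
    ultimately show ?thesis using assms(1) unfolding g1_consistent_def by simp
  next
    case False
    then have ii: "i = length h" using i by simp
    have "g1_posE \<sigma> cE (h @ [(b,x)]) = \<sigma> h b" "g1_posA cA (h @ [(b,x)]) = x"
      by (simp_all add: g1_posE_def g1_posA_def)
    then show ?thesis using ii assms by simp
  qed
qed

lemma posE_cons:
  "g1_posE \<sigma> cE ((a,x) # h) = g1_posE (\<lambda>h b. \<sigma> ((a,x) # h) b) (\<sigma> [] a) h"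
  by (cases h) (auto simp: g1_posE_def)

lemma posA_cons: "g1_posA cA ((a,x) # h) = g1_posA x h"
  by (cases h) (auto simp: g1_posA_def)

lemma consistent_cons:
  assumes "g1_consistent N (\<lambda>h b. \<sigma> ((a,x) # h) b) (\<sigma> [] a) x h" "a \<in> ocn_alph N"
    "ocn_step N cE a (\<sigma> [] a)" "ocn_step N cA a x"
  shows "g1_consistent N \<sigma> cE cA ((a,x) # h)"
  unfolding g1_consistent_def
proof (intro allI impI)
  fix i assume i: "i < length ((a,x) # h)"
  show "fst (((a,x) # h) ! i) \<in> ocn_alph N \<and>
      ocn_step N (g1_posE \<sigma> cE (take i ((a,x) # h))) (fst (((a,x) # h) ! i)) (g1_posE \<sigma> cE (take (Suc i) ((a,x) # h))) \<and>
      ocn_step N (g1_posA cA (take i ((a,x) # h))) (fst (((a,x) # h) ! i)) (g1_posA cA (take (Suc i) ((a,x) # h)))"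
  proof (cases i)
    case 0
    then show ?thesis using assms by (simp add: g1_posE_def g1_posA_def)
  next
    case (Suc j)
    then have j: "j < length h" using i by simp
    have "take i ((a,x) # h) = (a,x) # take j h" "take (Suc i) ((a,x) # h) = (a,x) # take (Suc j) h"
      using Suc by simp_all
    then show ?thesis using assms(1) j Suc unfolding g1_consistent_def
      by (simp only: posE_cons posA_cons) simp
  qed
qed

lemma shift_winning:
  assumes "g1_winning N \<sigma> cE cA" "a \<in> ocn_alph N"
    "ocn_step N cE a (\<sigma> [] a)" "ocn_step N cA a x"
  shows "g1_winning N (\<lambda>h b. \<sigma> ((a,x) # h) b) (\<sigma> [] a) x"
  unfolding g1_winning_def
proof (intro allI impI)
  fix h b assume hb: "g1_consistent N (\<lambda>h b. \<sigma> ((a,x) # h) b) (\<sigma> [] a) x h \<and> b \<in> ocn_alph N"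
  then have "g1_consistent N \<sigma> cE cA ((a,x) # h)" using consistent_cons[OF conjunct1[OF hb] assms(2-4)] by blast
  with assms(1) hb have W: "((\<exists>e'. ocn_step N (g1_posE \<sigma> cE ((a,x) # h)) b e') \<longrightarrow>
        ocn_step N (g1_posE \<sigma> cE ((a,x) # h)) b (\<sigma> ((a,x) # h) b) \<and>
        (\<forall>c'. ocn_step N (g1_posA cA ((a,x) # h)) b c' \<longrightarrow>
            fst c' \<in> ocn_final N \<longrightarrow> fst (\<sigma> ((a,x) # h) b) \<in> ocn_final N)) \<and>
     (\<not> (\<exists>e'. ocn_step N (g1_posE \<sigma> cE ((a,x) # h)) b e') \<longrightarrow>
        \<not> (\<exists>c'. ocn_step N (g1_posA cA ((a,x) # h)) b c' \<and>
               (\<exists>v c''. ocn_run N c' v c'' \<and> fst c'' \<in> ocn_final N)))"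
    unfolding g1_winning_def by blast
  show "((\<exists>e'. ocn_step N (g1_posE (\<lambda>h b. \<sigma> ((a,x) # h) b) (\<sigma> [] a) h) b e') \<longrightarrow>
        ocn_step N (g1_posE (\<lambda>h b. \<sigma> ((a,x) # h) b) (\<sigma> [] a) h) b ((\<lambda>h b. \<sigma> ((a,x) # h) b) h b) \<and>
        (\<forall>c'. ocn_step N (g1_posA x h) b c' \<longrightarrow>
            fst c' \<in> ocn_final N \<longrightarrow> fst ((\<lambda>h b. \<sigma> ((a,x) # h) b) h b) \<in> ocn_final N)) \<and>
     (\<not> (\<exists>e'. ocn_step N (g1_posE (\<lambda>h b. \<sigma> ((a,x) # h) b) (\<sigma> [] a) h) b e') \<longrightarrow>
        \<not> (\<exists>c'. ocn_step N (g1_posA x h) b c' \<and>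
               (\<exists>v c''. ocn_run N c' v c'' \<and> fst c'' \<in> ocn_final N)))"
    using W by (simp only: posE_cons posA_cons)
qed

lemma g1_inclusion:
  assumes "ocn_wf N" "g1_winning N \<sigma> cE cA"
  shows "g1_consistent N \<sigma> cE cA h \<Longrightarrow> ocn_run N (g1_posA cA h) v c \<Longrightarrow> v \<noteq> [] \<Longrightarrow>
     fst c \<in> ocn_final N \<Longrightarrow> \<exists>c2. ocn_run N (g1_posE \<sigma> cE h) v c2 \<and> fst c2 \<in> ocn_final N"
proof (induction v arbitrary: h)
  case Nil then show ?case by simp
next
  case (Cons b v)
  from Cons.prems(2) obtain x where sx: "ocn_step N (g1_posA cA h) b x" and rx: "ocn_run N x v c"
    by (cases rule: ocn_run.cases) auto
  have b: "b \<in> ocn_alph N" using ocn_step_wf[OF assms(1) sx] by simp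
  have W: "((\<exists>e'. ocn_step N (g1_posE \<sigma> cE h) b e') \<longrightarrow>
        ocn_step N (g1_posE \<sigma> cE h) b (\<sigma> h b) \<and>
        (\<forall>c'. ocn_step N (g1_posA cA h) b c' \<longrightarrow>
            fst c' \<in> ocn_final N \<longrightarrow> fst (\<sigma> h b) \<in> ocn_final N)) \<and>
     (\<not> (\<exists>e'. ocn_step N (g1_posE \<sigma> cE h) b e') \<longrightarrow>
        \<not> (\<exists>c'. ocn_step N (g1_posA cA h) b c' \<and>
               (\<exists>v c''. ocn_run N c' v c'' \<and> fst c'' \<in> ocn_final N)))"
    using assms(2) Cons.prems(1) b unfolding g1_winning_def by blast
  have ex: "\<exists>e'. ocn_step N (g1_posE \<sigma> cE h) b e'" using W sx rx Cons.prems(4) by blast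
  then have se: "ocn_step N (g1_posE \<sigma> cE h) b (\<sigma> h b)" using W by blast
  show ?case
  proof (cases "v = []")
    case True
    then have "c = x" using rx by (auto elim: ocn_run.cases)
    then have "fst (\<sigma> h b) \<in> ocn_final N" using W ex sx Cons.prems(4) by blast
    moreover have "ocn_run N (g1_posE \<sigma> cE h) [b] (\<sigma> h b)" using se by (auto intro: ocn_run.intros)
    ultimately show ?thesis using True by blast
  next
    case False
    have hc: "g1_consistent N \<sigma> cE cA (h @ [(b,x)])" using consistent_snoc[OF Cons.prems(1) b se sx] .
    have "g1_posA cA (h @ [(b,x)]) = x" "g1_posE \<sigma> cE (h @ [(b,x)]) = \<sigma> h b"
      by (simp_all add: g1_posE_def g1_posA_def)
    then obtain c2 where r2: "ocn_run N (\<sigma> h b) v c2" "fst c2 \<in> ocn_final N"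
      using Cons.IH[OF hc] rx False Cons.prems(4) by auto
    have "ocn_run N (g1_posE \<sigma> cE h) (b # v) c2" using se r2(1) by (rule ocn_run.run_cons)
    then show ?thesis using r2(2) by blast
  qed
qed


lemma consistent_facts:
  assumes "letter_game_winning N f"
  shows "g1_consistent N (\<lambda>h a. f (map fst h @ [a])) (ocn_init N, 0) (ocn_init N, 0) h \<Longrightarrow>
    g1_posE (\<lambda>h a. f (map fst h @ [a])) (ocn_init N, 0) h = f (map fst h) \<and>
    letter_reached N f (map fst h) \<and> ocn_run N (ocn_init N, 0) (map fst h) (g1_posA (ocn_init N, 0) h)"
proof (induction h rule: rev_induct)
  case Nil
  then show ?case using assms by (simp add: g1_posE_def g1_posA_def letter_reached_def letter_game_winning_def
     ocn_run.intros)
next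
  case (snoc y h)
  let ?\<sigma> = "\<lambda>h a. f (map fst h @ [a])"
  let ?c0 = "(ocn_init N, 0::nat)"
  have ch: "g1_consistent N ?\<sigma> ?c0 ?c0 h" using consistent_prefix snoc.prems by blast
  note IH = snoc.IH[OF ch]
  have pe: "g1_posE ?\<sigma> ?c0 (h @ [y]) = f (map fst (h @ [y]))" by (simp add: g1_posE_def)
  have st: "fst y \<in> ocn_alph N \<and>
      ocn_step N (g1_posE ?\<sigma> ?c0 h) (fst y) (g1_posE ?\<sigma> ?c0 (h @ [y])) \<and>
      ocn_step N (g1_posA ?c0 h) (fst y) (g1_posA ?c0 (h @ [y]))"
    using snoc.prems unfolding g1_consistent_def
    by (metis (no_types, lifting) butlast_snoc length_append_singleton lessI nth_append_length take_all_iff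
        take_butlast order.refl)
  have lr: "letter_reached N f (map fst (h @ [y]))"
    unfolding letter_reached_def
  proof (intro conjI allI impI)
    show "set (map fst (h @ [y])) \<subseteq> ocn_alph N" using IH st unfolding letter_reached_def by auto
  next
    fix i assume i: "i < length (map fst (h @ [y]))"
    show "ocn_step N (f (take i (map fst (h @ [y])))) (map fst (h @ [y]) ! i)
          (f (take (Suc i) (map fst (h @ [y]))))"
    proof (cases "i < length h")
      case True
      then show ?thesis using IH unfolding letter_reached_def
        by (simp add: nth_append)
    next
      case False
      then have "i = length h" using i by simp
      then show ?thesis using st IH pe by (simp add: nth_append)
    qed
  qed
  have "ocn_run N (g1_posA ?c0 h) [fst y] (g1_posA ?c0 (h @ [y]))"
    using st ocn_run.run_nil by (blast intro: ocn_run.run_cons)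
  then have "ocn_run N ?c0 (map fst h @ [fst y]) (g1_posA ?c0 (h @ [y]))"
    using ocn_run_append IH by blast
  then show ?case using pe lr by simp
qed

lemma hd_g1:
  assumes "ocn_wf N" "letter_game_winning N f"
  shows "eve_wins_G1 N (ocn_init N, 0) (ocn_init N, 0)"
  unfolding eve_wins_G1_def
proof
  let ?\<sigma> = "\<lambda>h a. f (map fst h @ [a])"
  let ?c0 = "(ocn_init N, 0::nat)"
  show "g1_winning N ?\<sigma> ?c0 ?c0"
    unfolding g1_winning_def
  proof (intro allI impI conjI)
    fix h a assume ha: "g1_consistent N ?\<sigma> ?c0 ?c0 h \<and> a \<in> ocn_alph N"
    note F = consistent_facts[OF assms(2) conjunct1[OF ha]]
    let ?w = "map fst h"
    have L: "((\<exists>c'. ocn_step N (f ?w) a c') \<longrightarrow>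
            ocn_step N (f ?w) a (f (?w @ [a])) \<and>
            (?w @ [a] \<in> ocn_lang N \<longrightarrow> fst (f (?w @ [a])) \<in> ocn_final N)) \<and>
        (\<not> (\<exists>c'. ocn_step N (f ?w) a c') \<longrightarrow>
            \<not> (\<exists>v. (?w @ [a]) @ v \<in> ocn_lang N))"
      using assms(2) F ha unfolding letter_game_winning_def by blast
    {
      assume "\<exists>e'. ocn_step N (g1_posE ?\<sigma> ?c0 h) a e'"
      then have ex: "\<exists>c'. ocn_step N (f ?w) a c'" using F by simp
      then show "ocn_step N (g1_posE ?\<sigma> ?c0 h) a (?\<sigma> h a)" using L F by simp
      fix c' assume s: "ocn_step N (g1_posA ?c0 h) a c'" and fc: "fst c' \<in> ocn_final N"
      have "ocn_run N (g1_posA ?c0 h) [a] c'" using s ocn_run.run_nil by (rule ocn_run.run_cons)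
      then have "ocn_run N ?c0 (?w @ [a]) c'"
        using ocn_run_append F by blast
      then have "?w @ [a] \<in> ocn_lang N" using fc unfolding ocn_lang_def by blast
      then show "fst (?\<sigma> h a) \<in> ocn_final N" using L ex by simp
    }
    assume ne: "\<not> (\<exists>e'. ocn_step N (g1_posE ?\<sigma> ?c0 h) a e')"
    show "\<not> (\<exists>c'. ocn_step N (g1_posA ?c0 h) a c' \<and>
               (\<exists>v c''. ocn_run N c' v c'' \<and> fst c'' \<in> ocn_final N))"
    proof
      assume "\<exists>c'. ocn_step N (g1_posA ?c0 h) a c' \<and>
               (\<exists>v c''. ocn_run N c' v c'' \<and> fst c'' \<in> ocn_final N)"
      then obtain c' v c'' where s: "ocn_step N (g1_posA ?c0 h) a c'" and r: "ocn_run N c' v c''"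
        and fc: "fst c'' \<in> ocn_final N" by blast
      have "ocn_run N (g1_posA ?c0 h) (a # v) c''" using s r by (rule ocn_run.run_cons)
      then have "ocn_run N ?c0 (?w @ (a # v)) c''" using F ocn_run_append by blast
      then have "(?w @ [a]) @ v \<in> ocn_lang N" using fc unfolding ocn_lang_def by (simp del: split_paired_Ex) blast
      moreover have "\<not> (\<exists>c'. ocn_step N (f ?w) a c')" using ne F by simp
      ultimately show False using L by blast
    qed
  qed
qed

definition per :: "nat set \<Rightarrow> nat \<Rightarrow> nat \<Rightarrow> bool" where
  "per S T p \<longleftrightarrow> p > 0 \<and> (\<forall>k \<ge> T. k \<in> S \<longleftrightarrow> k + p \<in> S)"

lemma per_mult:
  assumes "per S T p" "k \<ge> T" shows "k \<in> S \<longleftrightarrow> k + j * p \<in> S"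
proof (induction j)
  case 0 then show ?case by simp
next
  case (Suc j)
  have "k + j * p \<ge> T" using assms(2) by simp
  then have "k + j * p \<in> S \<longleftrightarrow> k + j * p + p \<in> S" using assms(1) unfolding per_def by blast
  moreover have e: "k + Suc j * p = k + j * p + p" by simp
  ultimately show ?case using Suc unfolding e by blast
qed

lemma per_dvd:
  assumes "per S T p" "T \<le> T'" "p dvd P" "k \<ge> T'" shows "k \<in> S \<longleftrightarrow> k + j * P \<in> S"
proof -
  obtain m where "P = p * m" using assms(3) by blast
  then have eq: "k + j * P = k + (j * m) * p" by simp
  have "k \<in> S \<longleftrightarrow> k + (j * m) * p \<in> S" using per_mult[OF assms(1), of k "j*m"] assms by simp
  then show ?thesis by (simp only: eq)
qed

lemma semilinear_per:
  assumes "semilinear_nat S" shows "\<exists>T p. per S T p"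
proof -
  obtain P where fP: "finite P" and S: "S = (\<Union>(b, p)\<in>P. {b + p * i | i. True})"
    using assms unfolding semilinear_nat_def by blast
  define T where "T = Suc (\<Sum>x\<in>P. fst x)"
  define \<pi> where "\<pi> = (\<Prod>x\<in>P. max 1 (snd x))"
  have Tb: "b < T" if "(b,p) \<in> P" for b p
  proof -
    have "fst (b,p) \<le> (\<Sum>x\<in>P. fst x)" using member_le_sum[OF that, of fst] fP by simp
    then show ?thesis unfolding T_def by simp
  qed
  have pd: "p dvd \<pi>" if "(b,p) \<in> P" "p > 0" for b p
  proof -
    have "max 1 (snd (b,p)) dvd \<pi>" unfolding \<pi>_def using dvd_prodI[OF fP that(1), of "\<lambda>x. max 1 (snd x)"] by simp
    then show ?thesis using that by simp
  qed
  have pp: "\<pi> > 0" unfolding \<pi>_def by (simp add: prod_pos)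
  have "\<forall>k \<ge> T. k \<in> S \<longleftrightarrow> k + \<pi> \<in> S"
  proof (intro allI impI)
    fix k assume k: "k \<ge> T"
    show "k \<in> S \<longleftrightarrow> k + \<pi> \<in> S"
    proof
      assume "k \<in> S"
      then obtain b p i where bp: "(b,p) \<in> P" and ki: "k = b + p * i" unfolding S by blast
      have "b < k" using Tb[OF bp] k by simp
      then have p0: "p > 0" using ki by (cases p) auto
      obtain m where m: "\<pi> = p * m" using pd[OF bp p0] by blast
      have "k + \<pi> = b + p * (i + m)" using ki m by (simp add: algebra_simps)
      then show "k + \<pi> \<in> S" unfolding S using bp by blast
    next
      assume "k + \<pi> \<in> S"
      then obtain b p i where bp: "(b,p) \<in> P" and ki: "k + \<pi> = b + p * i" unfolding S by blast
      have bk: "b < k" using Tb[OF bp] k by simp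
      then have p0: "p > 0" using ki pp by (cases p) auto
      obtain m where m: "\<pi> = p * m" using pd[OF bp p0] by blast
      have "p * m < p * i" using ki m bk by linarith
      then have "m < i" using p0 by simp
      then have "p * i = p * (i - m) + p * m" by (metis add.commute le_add_diff_inverse less_imp_le_nat
          distrib_left)
      then have "k = b + p * (i - m)" using ki m by linarith
      then show "k \<in> S" unfolding S using bp by blast
    qed
  qed
  then show ?thesis unfolding per_def using pp by blast
qed


definition alpha :: "nat \<Rightarrow> nat \<Rightarrow> nat \<Rightarrow> nat" where
  "alpha T p k = (if k < T then k else T + (k - T) mod p)"

lemma alpha_lt: "p > 0 \<Longrightarrow> alpha T p k < T + p"
  unfolding alpha_def by auto

lemma mod_pred_cong:
  fixes x y p :: nat
  assumes "(x + 1) mod p = (y + 1) mod p" "p > 0"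
  shows "x mod p = y mod p"
proof -
  have "x mod p = (x + 1 + (p - 1)) mod p" using assms(2) by simp
  also have "\<dots> = ((x + 1) mod p + (p - 1)) mod p" by (simp add: mod_add_left_eq)
  also have "\<dots> = ((y + 1) mod p + (p - 1)) mod p" using assms(1) by simp
  also have "\<dots> = (y + 1 + (p - 1)) mod p" by (simp add: mod_add_left_eq)
  also have "\<dots> = y mod p" using assms(2) by simp
  finally show ?thesis .
qed

lemma alpha_step:
  fixes k1 k2 T p :: nat and d :: int
  assumes p: "p > 0" and al: "alpha T p k1 = alpha T p k2" and g: "(k1 \<le> T) = (k2 \<le> T)"
    and d: "d \<in> {-1, 0, 1}" and n1: "int k1 + d \<ge> 0" and n2: "int k2 + d \<ge> 0"
  shows "alpha T p (nat (int k1 + d)) = alpha T p (nat (int k2 + d)) \<and>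
    int (nat (int k1 + d) - T) - int (k1 - T) = int (nat (int k2 + d) - T) - int (k2 - T)"
proof (cases "k1 < T \<or> k2 < T \<or> k1 = T \<or> k2 = T")
  case True
  have "k1 = k2"
  proof -
    have "k1 < T \<Longrightarrow> k2 < T" using al unfolding alpha_def by (auto split: if_splits)
    moreover have "k2 < T \<Longrightarrow> k1 < T" using al unfolding alpha_def by (auto split: if_splits)
    ultimately show ?thesis using True al g unfolding alpha_def by (auto split: if_splits)
  qed
  then show ?thesis by simp
next
  case False
  then have k1: "k1 > T" and k2: "k2 > T" by auto
  have m: "(k1 - T) mod p = (k2 - T) mod p" using al k1 k2 unfolding alpha_def by simp
  consider "d = -1" | "d = 0" | "d = 1" using d by auto
  then show ?thesis
  proof cases
    case 1
    obtain x1 where x1: "k1 = T + x1 + 1" using k1 by (metis add.commute add_Suc less_iff_Suc_add Suc_eq_plus1)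
    obtain x2 where x2: "k2 = T + x2 + 1" using k2 by (metis add.commute add_Suc less_iff_Suc_add Suc_eq_plus1)
    have "(x1 + 1) mod p = (x2 + 1) mod p" using m x1 x2 by simp
    then have "x1 mod p = x2 mod p" using mod_pred_cong p by blast
    moreover have "nat (int k1 + d) = T + x1" "nat (int k2 + d) = T + x2" using 1 x1 x2 by simp_all
    ultimately show ?thesis using x1 x2 unfolding alpha_def by simp
  next
    case 2 then show ?thesis using al k1 k2 by simp
  next
    case 3
    have "nat (int k1 + d) = Suc k1" "nat (int k2 + d) = Suc k2" using 3 by simp_all
    moreover have "(Suc k1 - T) mod p = (Suc k2 - T) mod p"
      using m k1 k2 by (metis Suc_diff_le less_imp_le_nat mod_Suc_eq)
    ultimately show ?thesis using k1 k2 unfolding alpha_def by simp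
  qed
qed


lemma g1_win_at:
  assumes "g1_winning N \<sigma> cE cA" "g1_consistent N \<sigma> cE cA h" "a \<in> ocn_alph N"
  shows "(\<exists>e'. ocn_step N (g1_posE \<sigma> cE h) a e') \<Longrightarrow> ocn_step N (g1_posE \<sigma> cE h) a (\<sigma> h a)"
    and "(\<exists>e'. ocn_step N (g1_posE \<sigma> cE h) a e') \<Longrightarrow> ocn_step N (g1_posA cA h) a c' \<Longrightarrow>
         fst c' \<in> ocn_final N \<Longrightarrow> fst (\<sigma> h a) \<in> ocn_final N"
    and "\<not> (\<exists>e'. ocn_step N (g1_posE \<sigma> cE h) a e') \<Longrightarrow> ocn_step N (g1_posA cA h) a c' \<Longrightarrow>
         ocn_run N c' v c'' \<Longrightarrow> fst c'' \<in> ocn_final N \<Longrightarrow> False"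
  using assms unfolding g1_winning_def by blast+

theorem lemma6:
  fixes N :: "('q, 'a) ocn"
  assumes "ocn_wf N"
    and "history_deterministic N"
    and "semilinear_strategy_property N"
  shows "\<exists>D :: (nat, 'a) oca. oca_wf D \<and> oca_alph D = ocn_alph N \<and>
           oca_deterministic D \<and> oca_lang D = ocn_lang N"
proof -
  note wf = assms(1)
  let ?Q = "ocn_states N" and ?S = "ocn_alph N" and ?Dl = "ocn_trans N" and ?F = "ocn_final N"
  have fQ: "finite ?Q" and fS: "finite ?S" and q0Q: "ocn_init N \<in> ?Q" and FQ: "?F \<subseteq> ?Q"
    and DQ: "?Dl \<subseteq> ?Q \<times> ?S \<times> {-1, 0, 1} \<times> ?Q"
    using wf unfolding ocn_wf_def by auto
  have fD: "finite ?Dl"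
    by (rule finite_subset[OF DQ]) (simp add: fQ fS)
  have "\<forall>\<delta>\<in>?Dl. \<exists>T p. per {k. good_at N \<delta> k} T p"
    using assms(3) semilinear_per unfolding semilinear_strategy_property_def by blast
  then obtain Tf pf where Tp: "\<And>\<delta>. \<delta> \<in> ?Dl \<Longrightarrow> per {k. good_at N \<delta> k} (Tf \<delta>) (pf \<delta>)"
    by metis
  define T where "T = (\<Sum>\<delta>\<in>?Dl. Tf \<delta>)"
  define \<pi> where "\<pi> = (\<Prod>\<delta>\<in>?Dl. pf \<delta>)"
  have pi0: "\<pi> > 0" unfolding \<pi>_def using Tp unfolding per_def by (simp add: prod_pos)
  have inv: "good_at N \<delta> k \<longleftrightarrow> good_at N \<delta> (alpha T \<pi> k)" if "\<delta> \<in> ?Dl" for \<delta> k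
  proof (cases "k < T")
    case True then show ?thesis unfolding alpha_def by simp
  next
    case False
    have al: "alpha T \<pi> k = T + (k - T) mod \<pi>" using False unfolding alpha_def by simp
    have kk: "k = alpha T \<pi> k + ((k - T) div \<pi>) * \<pi>" using al False
      by (metis add.assoc le_add_diff_inverse mod_div_mult_eq not_less)
    have t: "Tf \<delta> \<le> T" unfolding T_def using member_le_sum[OF that, of Tf] fD by simp
    have dv: "pf \<delta> dvd \<pi>" unfolding \<pi>_def using dvd_prodI[OF fD that] .
    have ge: "T \<le> alpha T \<pi> k" using al by simp
    have "good_at N \<delta> (alpha T \<pi> k) \<longleftrightarrow> good_at N \<delta> (alpha T \<pi> k + ((k - T) div \<pi>) * \<pi>)"
      using per_dvd[OF Tp[OF that] t dv ge, of "(k - T) div \<pi>"] by (simp only: mem_Collect_eq)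
    then show ?thesis using kk by metis
  qed
  obtain ix :: "'q \<Rightarrow> nat" and n where "ix ` ?Q = {i. i < n}" and ixi: "inj_on ix ?Q"
    using finite_imp_inj_to_nat_seg[OF fQ] by blast
  define enc where "enc p m = prod_encode (ix p, m)" for p m
  have enc_inj: "p1 = p2 \<and> m1 = m2" if "enc p1 m1 = enc p2 m2" "p1 \<in> ?Q" "p2 \<in> ?Q" for p1 p2 m1 m2
  proof -
    have "(ix p1, m1) = (ix p2, m2)" using that(1) inj_prod_encode[of UNIV] unfolding enc_def
      by (meson inj_onD UNIV_I)
    then show ?thesis using ixi that(2,3) by (auto dest: inj_onD)
  qed
  define al where "al = alpha T \<pi>"
  define ch where "ch p a m = (SOME \<delta>. \<delta> \<in> ?Dl \<and> fst \<delta> = p \<and> fst (snd \<delta>) = a \<and> good_at N \<delta> m)" for p a m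
  define gd where "gd k = (if k \<le> T then Zero else NonZero)" for k
  define kn where "kn k d = nat (int k + d)" for k :: nat and d :: int
  define ee where "ee k d = int (kn k d - T) - int (k - T)" for k :: nat and d :: int
  define tr where "tr = {(enc p (al k), gd k, a, ee k d, enc p' (al (kn k d))) | p a k d p'.
      (p, a, d, p') = ch p a (al k) \<and> (p, a, d, p') \<in> ?Dl \<and> good_at N (p, a, d, p') k}"
  define D where "D = \<lparr>oca_states = (\<lambda>(p, m). enc p m) ` (?Q \<times> {..<T + \<pi>}), oca_alph = ?S,
     oca_trans = tr, oca_init = enc (ocn_init N) (al 0),
     oca_final = (\<lambda>(p, m). enc p m) ` (?F \<times> {..<T + \<pi>})\<rparr>"
  have all: "al k < T + \<pi>" for k unfolding al_def using alpha_lt[OF pi0] .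
  have trD: "oca_trans D = tr" "oca_alph D = ?S" "oca_init D = enc (ocn_init N) (al 0)"
    "oca_final D = (\<lambda>(p, m). enc p m) ` (?F \<times> {..<T + \<pi>})"
    "oca_states D = (\<lambda>(p, m). enc p m) ` (?Q \<times> {..<T + \<pi>})" unfolding D_def by simp_all
  have trE: "\<exists>p k d p'. q = enc p (al k) \<and> g = gd k \<and> e = ee k d \<and> q' = enc p' (al (kn k d)) \<and>
      (p, a, d, p') = ch p a (al k) \<and> (p, a, d, p') \<in> ?Dl \<and> good_at N (p, a, d, p') k"
    if "(q, g, a, e, q') \<in> tr" for q g a e q'
    using that unfolding tr_def by blast
  have goodstep: "ocn_step_d N (p, k) a d (p', kn k d)" if "good_at N (p, a, d, p') k" for p a d p' k
    using that unfolding good_at_def kn_def by simp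
  have nonneg: "int k + d \<ge> 0" if "good_at N (p, a, d, p') k" for p a d p' k
    using goodstep[OF that] unfolding ocn_step_d_def by simp
  have dD: "d \<in> {-1, 0, 1} \<and> p \<in> ?Q \<and> p' \<in> ?Q \<and> a \<in> ?S" if "(p, a, d, p') \<in> ?Dl" for p a d p'
    using that DQ by blast
  have agree: "al (kn k0 d) = al (kn k d) \<and> ee k0 d = ee k d"
    if "al k0 = al k" "gd k0 = gd k" "d \<in> {-1, 0, 1}" "int k0 + d \<ge> 0" "int k + d \<ge> 0" for k0 k d
  proof -
    have "(k0 \<le> T) = (k \<le> T)" using that(2) unfolding gd_def by (auto split: if_splits)
    then show ?thesis using alpha_step[OF pi0 _ _ that(3-5)] that(1) unfolding al_def kn_def ee_def
      by blast
  qed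
  have Dstep: "oca_step D (enc p (al k), k - T) a (enc p' (al (kn k d)), kn k d - T)"
    if "(p, a, d, p') = ch p a (al k)" "(p, a, d, p') \<in> ?Dl" "good_at N (p, a, d, p') k" for p a d p' k
  proof -
    have "(enc p (al k), gd k, a, ee k d, enc p' (al (kn k d))) \<in> tr"
      unfolding tr_def using that by blast
    moreover have "int (k - T) + ee k d = int (kn k d - T)" unfolding ee_def by simp
    moreover have "gd k = Zero \<longrightarrow> k - T = 0" "gd k = NonZero \<longrightarrow> k - T > 0" unfolding gd_def by auto
    ultimately show ?thesis unfolding oca_step_def trD by (metis fst_conv snd_conv of_nat_0_le_iff)
  qed
  have Dstep_inv: "\<exists>p' k'. c' = (enc p' (al k'), k' - T) \<and> p' \<in> ?Q \<and> ocn_step N (p, k) a (p', k')"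
    if st: "oca_step D (enc p (al k), k - T) a c'" and pQ: "p \<in> ?Q" for p k a c'
  proof -
    obtain g e where t: "(enc p (al k), g, a, e, fst c') \<in> tr" and g1: "g = Zero \<longrightarrow> k - T = 0"
      and g2: "g = NonZero \<longrightarrow> k - T > 0" and sc: "int (snd c') = int (k - T) + e"
      using st unfolding oca_step_def trD by auto
    obtain p0 k0 d p' where e1: "enc p (al k) = enc p0 (al k0)" and e2: "g = gd k0" and e3: "e = ee k0 d"
      and e4: "fst c' = enc p' (al (kn k0 d))" and c: "(p0, a, d, p') = ch p0 a (al k0)"
      and dl: "(p0, a, d, p') \<in> ?Dl" and gk0: "good_at N (p0, a, d, p') k0"
      using trE[OF t] by blast
    have p0Q: "p0 \<in> ?Q" and dd: "d \<in> {-1, 0, 1}" and p'Q: "p' \<in> ?Q" using dD[OF dl] by auto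
    have pp: "p = p0" and aa: "al k = al k0" using enc_inj[OF e1 pQ p0Q] by auto
    have gg: "gd k0 = gd k" using g1 g2 e2 unfolding gd_def by (cases g) (auto split: if_splits)
    have gk: "good_at N (p, a, d, p') k"
      using gk0 inv[OF dl] aa pp unfolding al_def by metis
    have ag: "al (kn k0 d) = al (kn k d) \<and> ee k0 d = ee k d"
      using agree[OF aa[symmetric] gg dd nonneg[OF gk0] nonneg[OF gk]] .
    have "int (snd c') = int (kn k d - T)" using sc e3 ag unfolding ee_def by simp
    then have "c' = (enc p' (al (kn k d)), kn k d - T)" using e4 ag by (metis of_nat_eq_iff prod.collapse)
    moreover have "ocn_step N (p, k) a (p', kn k d)" using goodstep[OF gk] unfolding ocn_step_def by blast
    ultimately show ?thesis using p'Q by blast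
  qed
  have sound: "oca_run D c w c'' \<Longrightarrow> c = (enc p (al k), k - T) \<Longrightarrow> p \<in> ?Q \<Longrightarrow>
     \<exists>p'' k''. c'' = (enc p'' (al k''), k'' - T) \<and> p'' \<in> ?Q \<and> ocn_run N (p, k) w (p'', k'')" for c w c'' p k
  proof (induction arbitrary: p k rule: oca_run.induct)
    case (oca_run_nil c)
    then show ?case by (auto intro: ocn_run.intros)
  next
    case (oca_run_cons c a c' w c'')
    obtain p' k' where c': "c' = (enc p' (al k'), k' - T)" and p'Q: "p' \<in> ?Q" and s: "ocn_step N (p, k) a (p', k')"
      using Dstep_inv oca_run_cons.hyps(1) oca_run_cons.prems by blast
    obtain p'' k'' where "c'' = (enc p'' (al k''), k'' - T)" "p'' \<in> ?Q" "ocn_run N (p', k') w (p'', k'')"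
      using oca_run_cons.IH[OF c' p'Q] by blast
    then show ?case using s by (blast intro: ocn_run.run_cons)
  qed
  have complete: "p \<in> ?Q \<Longrightarrow> eve_wins_G1 N (p, k) (p, k) \<Longrightarrow> w \<noteq> [] \<Longrightarrow> ocn_run N (p, k) w c \<Longrightarrow>
      fst c \<in> ?F \<Longrightarrow> \<exists>c''. oca_run D (enc p (al k), k - T) w c'' \<and> fst c'' \<in> oca_final D"
    for p k w c
  proof (induction w arbitrary: p k c)
    case Nil then show ?case by simp
  next
    case (Cons a v)
    from Cons.prems(4) obtain cA where sA: "ocn_step N (p, k) a cA" and rA: "ocn_run N cA v c"
      by (cases rule: ocn_run.cases) auto
    have aS: "a \<in> ?S" using ocn_step_wf[OF wf sA] by simp
    obtain \<sigma> where \<sigma>: "g1_winning N \<sigma> (p, k) (p, k)" using Cons.prems(2) unfolding eve_wins_G1_def by blast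
    have c0: "g1_consistent N \<sigma> (p, k) (p, k) []" unfolding g1_consistent_def by simp
    have pE0: "g1_posE \<sigma> (p, k) [] = (p, k)" "g1_posA (p, k) [] = (p, k)"
      by (simp_all add: g1_posE_def g1_posA_def)
    have "ocn_step N (p, k) a (\<sigma> [] a)"
    proof (cases "\<exists>e'. ocn_step N (g1_posE \<sigma> (p, k) []) a e'")
      case True then show ?thesis using g1_win_at(1)[OF \<sigma> c0 aS] pE0 by simp
    next
      case False then show ?thesis using g1_win_at(3)[OF \<sigma> c0 aS False _ rA Cons.prems(5)] sA by (simp add: pE0)
    qed
    then obtain d0 where sd0: "ocn_step_d N (p, k) a d0 (\<sigma> [] a)" unfolding ocn_step_def by blast
    have sig: "\<sigma> [] a = (fst (\<sigma> [] a), nat (int k + d0))" using sd0 unfolding ocn_step_d_def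
      by (metis nat_int prod.collapse snd_conv)
    have d0D: "(p, a, d0, fst (\<sigma> [] a)) \<in> ?Dl" using sd0 unfolding ocn_step_d_def by simp
    have "good_at N (p, a, d0, fst (\<sigma> [] a)) k"
      unfolding good_at_def prod.case using Cons.prems(2) sd0 sig \<sigma> by auto
    then have "good_at N (p, a, d0, fst (\<sigma> [] a)) (al k)" using inv[OF d0D] unfolding al_def by simp
    then have "\<exists>\<delta>. \<delta> \<in> ?Dl \<and> fst \<delta> = p \<and> fst (snd \<delta>) = a \<and> good_at N \<delta> (al k)" using d0D by force
    then have chP: "ch p a (al k) \<in> ?Dl \<and> fst (ch p a (al k)) = p \<and> fst (snd (ch p a (al k))) = a \<and>
        good_at N (ch p a (al k)) (al k)"
      unfolding ch_def by (rule someI_ex)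
    obtain p1 a1 d p' where chE: "ch p a (al k) = (p1, a1, d, p')" by (cases "ch p a (al k)") auto
    have p1: "p1 = p" "a1 = a" using chP chE by auto
    have dl: "(p, a, d, p') \<in> ?Dl" using chP chE p1 by simp
    have gk: "good_at N (p, a, d, p') k" using chP chE p1 inv[OF dl] unfolding al_def by simp
    have ds: "oca_step D (enc p (al k), k - T) a (enc p' (al (kn k d)), kn k d - T)"
      using Dstep[OF _ dl gk] chE p1 by simp
    obtain \<sigma>' where \<sigma>': "g1_winning N \<sigma>' (p, k) (p, k)" and \<sigma>'a: "\<sigma>' [] a = (p', kn k d)"
      using gk unfolding good_at_def kn_def by auto
    have s': "ocn_step N (p, k) a (\<sigma>' [] a)" using goodstep[OF gk] \<sigma>'a unfolding ocn_step_def by auto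
    have p'Q: "p' \<in> ?Q" using dD[OF dl] by simp
    show ?case
    proof (cases "v = []")
      case True
      then have "c = cA" using rA by (auto elim: ocn_run.cases)
      have c0': "g1_consistent N \<sigma>' (p, k) (p, k) []" unfolding g1_consistent_def by simp
      have "fst (\<sigma>' [] a) \<in> ?F"
        using g1_win_at(2)[OF \<sigma>' c0' aS _ _ Cons.prems(5)] s' sA \<open>c = cA\<close> by (fastforce simp: g1_posE_def g1_posA_def)
      then have "p' \<in> ?F" using \<sigma>'a by simp
      then have "enc p' (al (kn k d)) \<in> oca_final D" unfolding trD using all by blast
      moreover have "oca_run D (enc p (al k), k - T) [a] (enc p' (al (kn k d)), kn k d - T)"
        using ds oca_run.oca_run_nil by (rule oca_run.oca_run_cons)
      ultimately show ?thesis using True by auto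
    next
      case False
      have hc: "g1_consistent N \<sigma>' (p, k) (p, k) ([] @ [(a, cA)])"
        by (rule consistent_snoc) (use aS s' sA in \<open>simp_all add: g1_consistent_def g1_posE_def g1_posA_def\<close>)
      have "g1_posA (p, k) [(a, cA)] = cA" "g1_posE \<sigma>' (p, k) [(a, cA)] = \<sigma>' [] a"
        by (simp_all add: g1_posA_def g1_posE_def)
      then obtain c2 where r2: "ocn_run N (p', kn k d) v c2" "fst c2 \<in> ?F"
        using g1_inclusion[OF wf \<sigma>' _ _ False Cons.prems(5), of "[(a, cA)]"] hc rA \<sigma>'a by auto
      have "g1_winning N (\<lambda>h b. \<sigma>' ((a, \<sigma>' [] a) # h) b) (\<sigma>' [] a) (\<sigma>' [] a)"
        using shift_winning[OF \<sigma>' aS s' s'] .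
      then have ew: "eve_wins_G1 N (p', kn k d) (p', kn k d)" unfolding eve_wins_G1_def using \<sigma>'a by auto
      obtain c'' where "oca_run D (enc p' (al (kn k d)), kn k d - T) v c''" "fst c'' \<in> oca_final D"
        using Cons.IH[OF p'Q ew False r2] by blast
      then show ?thesis using ds by (blast intro: oca_run.oca_run_cons)
    qed
  qed
  have wfD: "oca_wf D"
    unfolding oca_wf_def
  proof (intro conjI allI impI)
    show "finite (oca_states D)" unfolding trD using fQ by simp
    show "finite (oca_alph D)" unfolding trD using fS .
    show "oca_init D \<in> oca_states D" unfolding trD using q0Q all by blast
    show "oca_final D \<subseteq> oca_states D" unfolding trD using FQ by blast
    show "oca_trans D \<subseteq> oca_states D \<times> UNIV \<times> oca_alph D \<times> {-1, 0, 1} \<times> oca_states D"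
    proof
      fix x assume "x \<in> oca_trans D"
      then obtain q g a e q' where x: "x = (q, g, a, e, q')" and t: "(q, g, a, e, q') \<in> tr"
        unfolding trD by (metis prod_cases5)
      obtain p k d p' where "q = enc p (al k)" "e = ee k d" "q' = enc p' (al (kn k d))"
        and dl: "(p, a, d, p') \<in> ?Dl" and gk: "good_at N (p, a, d, p') k"
        using trE[OF t] by blast
      moreover have "e \<in> {-1, 0, 1}"
        using dD[OF dl] nonneg[OF gk] \<open>e = ee k d\<close> unfolding ee_def kn_def by auto
      ultimately show "x \<in> oca_states D \<times> UNIV \<times> oca_alph D \<times> {-1, 0, 1} \<times> oca_states D"
        unfolding trD x using dD[OF dl] all by blast
    qed
    fix q a d q'
    assume "(q, Zero, a, d, q') \<in> oca_trans D"
    then obtain p k d' p' where g: "Zero = gd k" and e: "d = ee k d'" and dl: "(p, a, d', p') \<in> ?Dl"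
      and gk: "good_at N (p, a, d', p') k"
      using trE unfolding trD by blast
    have "k \<le> T" using g unfolding gd_def by (auto split: if_splits)
    then show "d \<in> {0, 1}" using dD[OF dl] nonneg[OF gk] e unfolding ee_def kn_def by auto
  qed
  have detD: "oca_deterministic D"
    unfolding oca_deterministic_def
  proof (intro allI impI)
    fix q g a d q' d' q''
    assume t1: "(q, g, a, d, q') \<in> oca_trans D" and t2: "(q, g, a, d', q'') \<in> oca_trans D"
    obtain p1 k1 e1 p1' where a1: "q = enc p1 (al k1)" "g = gd k1" "d = ee k1 e1" "q' = enc p1' (al (kn k1 e1))"
      "(p1, a, e1, p1') = ch p1 a (al k1)" and dl1: "(p1, a, e1, p1') \<in> ?Dl" and gk1: "good_at N (p1, a, e1, p1') k1"
      using trE t1 unfolding trD by blast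
    obtain p2 k2 e2 p2' where a2: "q = enc p2 (al k2)" "g = gd k2" "d' = ee k2 e2" "q'' = enc p2' (al (kn k2 e2))"
      "(p2, a, e2, p2') = ch p2 a (al k2)" and dl2: "(p2, a, e2, p2') \<in> ?Dl" and gk2: "good_at N (p2, a, e2, p2') k2"
      using trE t2 unfolding trD by blast
    have "p1 = p2 \<and> al k1 = al k2" using enc_inj a1(1) a2(1) dD[OF dl1] dD[OF dl2] by metis
    then have pp: "p1 = p2" and aa: "al k1 = al k2" by auto
    have "(p1, a, e1, p1') = (p2, a, e2, p2')" using a1(5) a2(5) pp aa by simp
    then have ee: "e1 = e2" "p1' = p2'" by auto
    have "al (kn k1 e1) = al (kn k2 e1) \<and> ee k1 e1 = ee k2 e1"
      using agree[OF aa _ _ nonneg[OF gk1]] a1(2) a2(2) dD[OF dl1] nonneg[OF gk2] ee by simp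
    then show "d = d' \<and> q' = q''" using a1 a2 ee by simp
  qed
  have langD: "oca_lang D = ocn_lang N"
  proof
    show "oca_lang D \<subseteq> ocn_lang N"
    proof
      fix w assume "w \<in> oca_lang D"
      then obtain c where r0: "oca_run D (oca_init D, 0) w c" and f: "fst c \<in> oca_final D"
        unfolding oca_lang_def by blast
      have r: "oca_run D (enc (ocn_init N) (al 0), 0 - T) w c" using r0 trD(3) by simp
      obtain p'' k'' where c: "c = (enc p'' (al k''), k'' - T)" and pQ: "p'' \<in> ?Q"
        and rN: "ocn_run N (ocn_init N, 0) w (p'', k'')"
        using sound[OF r refl q0Q] by blast
      obtain f0 m where "enc p'' (al k'') = enc f0 m" "f0 \<in> ?F" using f c unfolding trD by auto
      then have "p'' \<in> ?F" using enc_inj pQ FQ by blast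
      then show "w \<in> ocn_lang N" using rN unfolding ocn_lang_def by auto
    qed
  next
    show "ocn_lang N \<subseteq> oca_lang D"
    proof
      fix w assume "w \<in> ocn_lang N"
      then obtain c where r: "ocn_run N (ocn_init N, 0) w c" and f: "fst c \<in> ?F"
        unfolding ocn_lang_def by auto
      show "w \<in> oca_lang D"
      proof (cases "w = []")
        case True
        then have "c = (ocn_init N, 0)" using r by (auto elim: ocn_run.cases)
        then have "oca_init D \<in> oca_final D" using f all unfolding trD by auto
        then show ?thesis using True unfolding oca_lang_def by (auto intro: oca_run.intros)
      next
        case False
        obtain f0 where "letter_game_winning N f0" using assms(2) unfolding history_deterministic_def by blast
        then have ew: "eve_wins_G1 N (ocn_init N, 0) (ocn_init N, 0)" using hd_g1[OF wf] by blast
        obtain c'' where "oca_run D (enc (ocn_init N) (al 0), 0 - T) w c''" "fst c'' \<in> oca_final D"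
          using complete[OF q0Q ew False r f] by blast
        then have "oca_run D (oca_init D, 0) w c''" using trD(3) by simp
        then show ?thesis using \<open>fst c'' \<in> oca_final D\<close> unfolding oca_lang_def by blast
      qed
    qed
  qed
  show ?thesis using wfD detD langD trD(2) by blast
qed

end
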